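(* Let $A$ be admissible, let $\ell>0$ with $A(x)=A_\infty$ for all $x\ge\ell$, and let $M:=\max_{x\in\mathbb{R}}|A'(x)/A(x)|$; assume $M>0$. Set $\lambda:=\frac M2e^{-M\ell}\sqrt{1-2M\ell e^{-2M\ell}}$, $\kappa:=\sqrt{\lambda^2+(M/2)^2}$ and $$g_1(x):=\frac{e^{Mx/2}}{\kappa}\big(\kappa\cosh(\kappa x)+(\lambda-M/2)\sinh(\kappa x)\big),\qquad g_2(x):=\frac{e^{Mx/2}}{\kappa}\big(\kappa\cosh(\kappa x)-(\lambda+M/2)\sinh(\kappa x)\big).$$ Then $g_1,g_2>0$ on $[0,\ell]$, $g_1(0)=g_2(0)=1$, and on $[0,\ell]$ $$g_1'-\tfrac M2|g_1-g_2|\ge\lambda g_1,\qquad -g_2'-\tfrac M2|g_1-g_2|\ge\lambda g_2.$$ Consequently, for every $\phi\in C_c^\infty(\mathbb{R})$ with $\operatorname{supp}\phi\subset(0,\infty)$ and $\tau_0:=\max\operatorname{supp}\phi$, the energy satisfies $\mathscr{E}_{\phi,g_1,g_2}(\tau)\le\mathscr{E}_{\phi,g_1,g_2}(\tau_0)e^{-\lambda(\tau-\tau_0)}$ for all $\tau>\tau_0$.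
   Context: A function $A:\mathbb{R}\to\mathbb{R}$ is admissible if $A\in C^\infty(\mathbb{R})$, $A>0$, and there are $x_+>x_->0$ and $A_\infty>0$ with $A(x)=1$ for $x<x_-$ and $A(x)=A_\infty$ for $x>x_+$. $\square_Au:=\partial_t^2u-\frac{1}{A(x)}\partial_x(A(x)\partial_xu)$. For $\phi\in C_c^\infty(\mathbb{R})$ supported in $(0,\infty)$, let $u\in C^\infty([0,\infty)\times\mathbb{R})$ solve $\square_Au=0$ for $x>0$, $t\in\mathbb{R}$; $\partial_xu(0,t)=\phi(t)$; $u(x,t)=0$ for $x>0$, $t<0$. For positive functions $g_1,g_2$ on $[0,\ell]$ the energy is $$\mathscr{E}_{\phi,g_1,g_2}(\tau):=\frac12\int_0^\ell\Big[g_1(x)\big(\partial_tu(x,\tau)+\partial_xu(x,\tau)\big)^2+g_2(x)\big(\partial_tu(x,\tau)-\partial_xu(x,\tau)\big)^2\Big]A(x)\,dx.$$ *)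

theory Defs
  imports "HOL-Analysis.Analysis"
begin

definition smooth1 :: "(real \<Rightarrow> real) \<Rightarrow> bool" where
  "smooth1 f \<longleftrightarrow> (\<forall>n x. ((deriv ^^ n) f) differentiable (at x))"

definition dX :: "(real \<times> real \<Rightarrow> real) \<Rightarrow> real \<times> real \<Rightarrow> real" where
  "dX f = (\<lambda>(x,t). deriv (\<lambda>y. f (y,t)) x)"
definition dT :: "(real \<times> real \<Rightarrow> real) \<Rightarrow> real \<times> real \<Rightarrow> real" where
  "dT f = (\<lambda>(x,t). deriv (\<lambda>s. f (x,s)) t)"

text \<open>Iterated partial derivative; True = d/dx, False = d/dt.\<close>
fun pd :: "bool list \<Rightarrow> (real \<times> real \<Rightarrow> real) \<Rightarrow> real \<times> real \<Rightarrow> real" where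
  "pd [] f = f"
| "pd (b # bs) f = (if b then dX else dT) (pd bs f)"

definition smooth2 :: "(real \<times> real \<Rightarrow> real) \<Rightarrow> bool" where
  "smooth2 f \<longleftrightarrow> (\<forall>bs. continuous_on UNIV (pd bs f) \<and>
      (\<forall>x t. (\<lambda>y. pd bs f (y,t)) differentiable (at x) \<and>
             (\<lambda>s. pd bs f (x,s)) differentiable (at t)))"

definition admissible :: "(real \<Rightarrow> real) \<Rightarrow> real \<Rightarrow> real \<Rightarrow> real \<Rightarrow> bool" where
  "admissible A xm xp Ainf \<longleftrightarrow> smooth1 A \<and> (\<forall>x. A x > 0) \<and> 0 < xm \<and> xm < xp \<and> Ainf > 0
     \<and> (\<forall>x. x < xm \<longrightarrow> A x = 1) \<and> (\<forall>x. x > xp \<longrightarrow> A x = Ainf)"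

definition supp :: "(real \<Rightarrow> real) \<Rightarrow> real set" where
  "supp \<phi> = closure {t. \<phi> t \<noteq> 0}"

text \<open>u (here: a smooth function U on R^2 whose restriction to x \<ge> 0 is u) solves the
  boundary value problem with Neumann data \<phi>.\<close>
definition solves_bvp :: "(real \<Rightarrow> real) \<Rightarrow> (real \<Rightarrow> real) \<Rightarrow> (real \<times> real \<Rightarrow> real) \<Rightarrow> bool" where
  "solves_bvp A \<phi> U \<longleftrightarrow> smooth2 U
     \<and> (\<forall>x t. x > 0 \<longrightarrow>
          pd [False, False] U (x,t) - (1 / A x) * deriv (\<lambda>y. A y * dX U (y,t)) x = 0)
     \<and> (\<forall>t. dX U (0,t) = \<phi> t)
     \<and> (\<forall>x t. x > 0 \<longrightarrow> t < 0 \<longrightarrow> U (x,t) = 0)"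

definition energy :: "(real \<Rightarrow> real) \<Rightarrow> (real \<times> real \<Rightarrow> real) \<Rightarrow> (real \<Rightarrow> real) \<Rightarrow> (real \<Rightarrow> real)
    \<Rightarrow> real \<Rightarrow> real \<Rightarrow> real" where
  "energy A U g1 g2 l \<tau> = 1/2 * integral {0..l}
     (\<lambda>x. (g1 x * (dT U (x,\<tau>) + dX U (x,\<tau>))^2 + g2 x * (dT U (x,\<tau>) - dX U (x,\<tau>))^2) * A x)"

definition lam :: "real \<Rightarrow> real \<Rightarrow> real" where
  "lam M l = M / 2 * exp (- M * l) * sqrt (1 - 2 * M * l * exp (- 2 * M * l))"

definition kap :: "real \<Rightarrow> real \<Rightarrow> real" where
  "kap M l = sqrt ((lam M l)^2 + (M/2)^2)"

definition g1 :: "real \<Rightarrow> real \<Rightarrow> real \<Rightarrow> real" where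
  "g1 M l x = exp (M * x / 2) / kap M l *
     (kap M l * cosh (kap M l * x) + (lam M l - M/2) * sinh (kap M l * x))"

definition g2 :: "real \<Rightarrow> real \<Rightarrow> real \<Rightarrow> real" where
  "g2 M l x = exp (M * x / 2) / kap M l *
     (kap M l * cosh (kap M l * x) - (lam M l + M/2) * sinh (kap M l * x))"

end

theory Submission
  imports Defs
begin

lemma lam_pos: assumes M: "M > 0" and l: "l > 0" shows "lam M l > 0"
proof -
  have "2*M*l < exp (2*M*l)" using exp_ge_add_one_self[of "2*M*l"] by linarith
  then have "2 * M * l * exp (- 2 * M * l) < 1"
    by (simp add: exp_minus field_simps)
  then show ?thesis using M unfolding lam_def by simp
qed

lemma lam_le: assumes M: "M > 0" and l: "l > 0" shows "lam M l \<le> M/2 * exp (- M * l)"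
proof -
  have "0 \<le> 2 * M * l * exp (- 2 * M * l)" using M l by simp
  then have "sqrt (1 - 2 * M * l * exp (- 2 * M * l)) \<le> 1" by simp
  then show ?thesis unfolding lam_def using M
    by (simp add: mult_left_le)
qed

lemma kap_pos: assumes M: "M > 0" shows "kap M l > 0"
  using M unfolding kap_def by (intro real_sqrt_gt_zero add_nonneg_pos) auto

lemma kap_sq: "(kap M l)^2 = (lam M l)^2 + (M/2)^2"
  unfolding kap_def by simp

lemma g1_0: assumes "M > 0" shows "g1 M l 0 = 1"
  using kap_pos[OF assms, of l] unfolding g1_def by simp
lemma g2_0: assumes "M > 0" shows "g2 M l 0 = 1"
  using kap_pos[OF assms, of l] unfolding g2_def by simp

lemma alg1: fixes E C S k L M x :: real assumes k: "k \<noteq> 0" and ksq: "k*k = L*L + (M/2)*(M/2)" shows "((E*(((0*x+1*M)*2 - M*x*0)/(2*2)) * (k*C + (L - M/2)*S) + (0*C + S*(0*x+1*k)*k + (0*S + C*(0*x+1*k)*(L-M/2)))*E)*k - E*(k*C+(L-M/2)*S)*0)/(k*k) = L*(E/k*(k*C+(L-M/2)*S)) + M/2*(E/k*(k*C+(L-M/2)*S) - E/k*(k*C - (L+M/2)*S))"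
  using k ksq  by (simp add: field_simps) algebra

lemma alg2: fixes E C S k L M x :: real assumes k: "k \<noteq> 0" and ksq: "k*k = L*L + (M/2)*(M/2)" shows "((E*(((0*x+1*M)*2 - M*x*0)/(2*2)) * (k*C - (L + M/2)*S) + (0*C + S*(0*x+1*k)*k - (0*S + C*(0*x+1*k)*(L+M/2)))*E)*k - E*(k*C-(L+M/2)*S)*0)/(k*k) = - L*(E/k*(k*C-(L+M/2)*S)) - M/2*(E/k*(k*C+(L-M/2)*S) - E/k*(k*C - (L+M/2)*S))"
  using k ksq  by (simp add: field_simps) algebra

lemma g1_deriv: assumes M: "M > 0"
  shows "(g1 M l has_real_derivative (lam M l * g1 M l x + M/2 * (g1 M l x - g2 M l x))) (at x)"
proof -
  define k where "k = kap M l"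
  define L where "L = lam M l"
  have k: "k > 0" using kap_pos[OF M] k_def by simp
  have ksq: "k*k = L*L + (M/2)*(M/2)" using kap_sq[of M l] unfolding k_def L_def by (simp add: power2_eq_square)
  have g1: "g1 M l = (\<lambda>x. exp (M * x / 2) / k * (k * cosh (k * x) + (L - M/2) * sinh (k * x)))"
    unfolding g1_def k_def L_def by auto
  have g2: "g2 M l = (\<lambda>x. exp (M * x / 2) / k * (k * cosh (k * x) - (L + M/2) * sinh (k * x)))"
    unfolding g2_def k_def L_def by auto
  show ?thesis unfolding g1 g2 L_def[symmetric]
    apply (rule DERIV_cong)
     using k apply (auto intro!: derivative_eq_intros)[1]
    using alg1[where E="exp (M*x/2)" and C="cosh (k*x)" and S="sinh (k*x)" and k=k and L=L and M=M and x=x] k ksq by simp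
qed

lemma g2_deriv: assumes M: "M > 0"
  shows "(g2 M l has_real_derivative (- lam M l * g2 M l x - M/2 * (g1 M l x - g2 M l x))) (at x)"
proof -
  define k where "k = kap M l"
  define L where "L = lam M l"
  have k: "k > 0" using kap_pos[OF M] k_def by simp
  have ksq: "k*k = L*L + (M/2)*(M/2)" using kap_sq[of M l] unfolding k_def L_def by (simp add: power2_eq_square)
  have g1: "g1 M l = (\<lambda>x. exp (M * x / 2) / k * (k * cosh (k * x) + (L - M/2) * sinh (k * x)))"
    unfolding g1_def k_def L_def by auto
  have g2: "g2 M l = (\<lambda>x. exp (M * x / 2) / k * (k * cosh (k * x) - (L + M/2) * sinh (k * x)))"
    unfolding g2_def k_def L_def by auto
  show ?thesis unfolding g1 g2 L_def[symmetric]
    apply (rule DERIV_cong)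
     using k apply (auto intro!: derivative_eq_intros)[1]
    using alg2[where E="exp (M*x/2)" and C="cosh (k*x)" and S="sinh (k*x)" and k=k and L=L and M=M and x=x] k ksq by simp
qed

lemma g1_minus_g2: assumes M: "M > 0" and x: "x \<ge> 0" and l: "l > 0" shows "g1 M l x - g2 M l x \<ge> 0"
proof -
  have "g1 M l x - g2 M l x = exp (M * x / 2) / kap M l * (2 * lam M l * sinh (kap M l * x))"
    unfolding g1_def g2_def by (simp add: algebra_simps)
  moreover have "sinh (kap M l * x) \<ge> 0" using kap_pos[OF M, of l] x by simp
  ultimately show ?thesis using kap_pos[OF M, of l] lam_pos[OF M l] by simp
qed

lemma g1_pos: assumes M: "M > 0" and x: "x \<ge> 0" and l: "l > 0" shows "g1 M l x > 0"
proof -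
  define k where "k = kap M l"
  define L where "L = lam M l"
  have k: "k > 0" using kap_pos[OF M] k_def by simp
  have L: "L > 0" using lam_pos[OF M l] L_def by simp
  have kM: "M/2 < k"
  proof -
    have "(M/2)^2 < L^2 + (M/2)^2" using L by simp
    then have "sqrt ((M/2)^2) < sqrt (L^2 + (M/2)^2)" by (rule real_sqrt_less_mono)
    then show ?thesis using M L_def k_def kap_def by simp
  qed
  have s: "sinh (k*x) \<ge> 0" using k x by simp
  have cs: "cosh (k*x) - sinh (k*x) > 0" by (simp add: cosh_minus_sinh)
  have "k * cosh (k * x) + (L - M/2) * sinh (k * x) \<ge> k * cosh (k*x) - k * sinh (k*x)"
  proof -
    have "(L - M/2) * sinh (k*x) \<ge> - k * sinh (k*x)" using s kM L
      by (intro mult_right_mono) auto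
    then show ?thesis by simp
  qed
  moreover have "k * cosh (k*x) - k * sinh (k*x) > 0" using cs k by (simp add: right_diff_distrib[symmetric])
  ultimately have "k * cosh (k * x) + (L - M/2) * sinh (k * x) > 0" by linarith
  then show ?thesis unfolding g1_def k_def[symmetric] L_def[symmetric] using k by simp
qed

lemma exp_quarter_lt2: "exp (1/4::real) < 2"
proof (rule ccontr)
  assume "\<not> exp (1/4::real) < 2"
  then have "(2::real)^4 \<le> exp (1/4) ^ 4" by (intro power_mono) auto
  also have "exp (1/4::real) ^ 4 = exp 1" by (simp add: exp_of_nat_mult[symmetric])
  finally show False using exp_le by simp
qed

lemma g2_pos: assumes M: "M > 0" and x: "x \<ge> 0" "x \<le> l" and l: "l > 0" shows "g2 M l x > 0"
proof -
  define k where "k = kap M l"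
  define L where "L = lam M l"
  define m where "m = M/2"
  define S where "S = M*l"
  have m: "m > 0" using M m_def by simp
  have k: "k > 0" using kap_pos[OF M] k_def by simp
  have L: "L > 0" using lam_pos[OF M l] L_def by simp
  have ksq: "k^2 = L^2 + m^2" using kap_sq[of M l] unfolding k_def L_def m_def by simp
  have Lle: "L \<le> m * exp (- S)" using lam_le[OF M l] unfolding L_def m_def S_def by simp
  have kle: "k \<le> m + L^2/(2*m)"
  proof -
    have L4: "0 \<le> L * (L * (L * L))" using L by simp
    have "k^2 \<le> (m + L^2/(2*m))^2" unfolding ksq using m L4
      by (simp add: power2_eq_square field_simps)
    then show ?thesis using k m by (smt (verit) power_mono zero_le_divide_iff zero_le_power2 power2_le_imp_le)
  qed
  have L2: "L^2 \<le> m^2 * exp (- 2 * S)"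
  proof -
    have "L^2 \<le> (m * exp (-S))^2" using Lle L by (intro power_mono) auto
    also have "\<dots> = m^2 * exp (- 2 * S)" by (simp add: power_mult_distrib exp_of_nat_mult[symmetric] power2_eq_square exp_add[symmetric])
    finally show ?thesis .
  qed
  have se: "S * exp (- 2 * S) \<le> 1/2"
  proof -
    have "2*S \<le> exp (2*S)" using exp_ge_add_one_self[of "2*S"] by linarith
    then have "2*S*exp (- 2 * S) \<le> exp (2*S) * exp (- 2 * S)" by (intro mult_right_mono) auto
    also have "\<dots> = 1" by (simp add: exp_add[symmetric])
    finally show ?thesis by simp
  qed
  have two_kl: "2*k*l \<le> S + 1/4"
  proof -
    have "2*k*l \<le> 2*l*(m + L^2/(2*m))" using kle l by simp
    also have "\<dots> = S + l*L^2/m" using m m_def S_def by (simp add: field_simps)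
    also have "l*L^2/m \<le> l * (m^2 * exp (- 2 * S)) / m" using L2 l m
      by (intro divide_right_mono mult_left_mono) auto
    also have "\<dots> = (S/2) * exp (- 2 * S)" using m m_def S_def by (simp add: field_simps power2_eq_square)
    also have "\<dots> \<le> 1/4" using se by simp
    finally show ?thesis by simp
  qed
  have kM: "m < k"
  proof -
    have "m^2 < k^2" using ksq L by simp
    then show ?thesis using k m by (simp add: power_less_imp_less_base)
  qed
  have Lmk: "L + m - k > 0"
  proof -
    have "k^2 < (L+m)^2" using ksq L m by (simp add: power2_eq_square algebra_simps)
    then show ?thesis using k L m by (simp add: power_less_imp_less_base)
  qed
  have key: "2*L*m*exp (2*k*l) < (L+m+k)^2"
  proof -
    have "2*L*m*exp (2*k*l) \<le> 2*(m*exp(-S))*m*exp (S + 1/4)"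
      using Lle two_kl m L by (intro mult_mono) auto
    also have "\<dots> = 2*m^2 * (exp(-S)*exp (S + 1/4))" by (simp add: power2_eq_square algebra_simps)
    also have "\<dots> = 2*m^2 * exp (1/4)" by (simp add: exp_add[symmetric])
    also have "\<dots> < 2*m^2*2" using exp_quarter_lt2 m by simp
    also have "\<dots> = (2*m)^2" by (simp add: power2_eq_square)
    also have "\<dots> \<le> (L+m+k)^2" using L m k kM by (intro power_mono) auto
    finally show ?thesis .
  qed
  have y0: "k*x \<ge> 0" and yl: "k*x \<le> k*l" using k x by auto
  have "(L+m-k) * exp (2*(k*x)) \<le> (L+m-k) * exp (2*k*l)" using Lmk yl by simp
  also have "\<dots> < L+m+k"
  proof -
    have prod: "(L+m-k)*(L+m+k) = 2*L*m" using ksq by (simp add: power2_eq_square algebra_simps)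
    have "(L+m-k) * exp (2*k*l) * (L+m+k) = ((L+m-k)*(L+m+k)) * exp (2*k*l)" by (simp only: ac_simps)
    also have "\<dots> = 2*L*m*exp (2*k*l)" by (simp only: prod)
    also have "\<dots> < (L+m+k) * (L+m+k)" using key by (simp add: power2_eq_square)
    finally have "(L+m-k) * exp (2*k*l) * (L+m+k) < (L+m+k) * (L+m+k)" .
    then show ?thesis using L m k by (simp add: mult_less_cancel_right)
  qed
  finally have A: "(L+m-k) * exp (2*(k*x)) < L+m+k" .
  define y where "y = k*x"
  have ee: "exp (2*(k*x)) = exp y * exp y" unfolding y_def by (metis exp_add mult_2)
  have "(L+m-k) * exp y * exp y < (L+m+k)" using A unfolding ee by (simp only: mult.assoc)
  then have "(L+m-k) * exp y * exp y * exp (-y) < (L+m+k) * exp (-y)" by (rule mult_strict_right_mono) simp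
  moreover have "exp y * exp (-y) = 1" by (simp add: exp_add[symmetric])
  ultimately have B: "(L+m-k) * exp y < (L+m+k) * exp (-y)" by (simp add: mult.assoc)
  have "k * cosh y - (L + m) * sinh y = ((L+m+k) * exp (-y) - (L+m-k) * exp y) / 2"
    unfolding cosh_field_def sinh_field_def by (simp add: field_simps)
  with B have C: "k * cosh y - (L + m) * sinh y > 0" by simp
  have "g2 M l x = exp (M*x/2)/k * (k * cosh y - (L + m) * sinh y)"
    unfolding g2_def k_def L_def m_def y_def by simp
  then show ?thesis using C k by simp
qed

lemma cbox_real_eq: "cbox (a::real) b = {a..b}" by (simp add: box_real)

lemma s2_cont: "smooth2 U \<Longrightarrow> continuous_on S (pd bs U)"
  unfolding smooth2_def using continuous_on_subset by blast

lemma s2_cont_at: "smooth2 U \<Longrightarrow> continuous (at z within S) (pd bs U)"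
  unfolding smooth2_def by (metis continuous_on_eq_continuous_within iso_tuple_UNIV_I continuous_within_subset subset_UNIV)

lemma s2_dx: assumes "smooth2 U"
  shows "((\<lambda>y. pd bs U (y,t)) has_real_derivative pd (True#bs) U (x,t)) (at x)"
proof -
  have "(\<lambda>y. pd bs U (y,t)) differentiable (at x)" using assms unfolding smooth2_def by blast
  then show ?thesis using DERIV_deriv_iff_real_differentiable by (auto simp: dX_def)
qed

lemma s2_dt: assumes "smooth2 U"
  shows "((\<lambda>s. pd bs U (x,s)) has_real_derivative pd (False#bs) U (x,t)) (at t)"
proof -
  have "(\<lambda>s. pd bs U (x,s)) differentiable (at t)" using assms unfolding smooth2_def by blast
  then show ?thesis using DERIV_deriv_iff_real_differentiable by (auto simp: dT_def)
qed

lemma s2_frechet: assumes U: "smooth2 U"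
  shows "(pd bs U has_derivative (\<lambda>(h,k). pd (True#bs) U (x,t) * h + pd (False#bs) U (x,t) * k)) (at (x,t))"
proof -
  have fx: "((\<lambda>x. pd bs U (x,t)) has_derivative (\<lambda>h. pd (True#bs) U (x,t) * h)) (at x within UNIV)"
    using s2_dx[OF U, of bs t x] unfolding has_field_derivative_def by simp
  have fy: "((\<lambda>y. pd bs U (x',y)) has_derivative blinfun_apply (blinfun_mult_right (pd (False#bs) U (x',y')))) (at y' within UNIV)" for x' y'
    using s2_dt[OF U, of bs x' y'] by (simp add: has_field_derivative_def mult.commute blinfun_mult_right.rep_eq)
  have c: "continuous (at (x,t) within UNIV \<times> UNIV) (\<lambda>(x', y'). blinfun_mult_right (pd (False#bs) U (x',y')))"
  proof -
    have "continuous (at (x,t)) (pd (False#bs) U)" by (rule s2_cont_at[OF U])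
    then have "continuous (at (x,t)) (\<lambda>z. blinfun_mult_right (pd (False#bs) U z))"
      by (rule bounded_linear.continuous[OF bounded_linear_blinfun_mult_right])
    then show ?thesis by (simp add: case_prod_beta')
  qed
  have "((\<lambda>(x, y). pd bs U (x,y)) has_derivative (\<lambda>(tx, ty). pd (True#bs) U (x,t) * tx + blinfun_apply (blinfun_mult_right (pd (False#bs) U (x,t))) ty)) (at (x, t) within UNIV \<times> UNIV)"
    by (rule has_derivative_partialsI[OF fx fy c]) auto
  then show ?thesis by (simp add: blinfun_mult_right.rep_eq case_prod_beta')
qed

lemma s2_line: assumes U: "smooth2 U"
  shows "((\<lambda>s. pd bs U (x0 + s, t0 - s)) has_real_derivative
      (pd (True#bs) U (x0 + s, t0 - s) - pd (False#bs) U (x0 + s, t0 - s))) (at s)"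
proof -
  have l: "((\<lambda>s. (x0 + s, t0 - s)) has_derivative (\<lambda>h. (h, - h))) (at s)"
    by (auto intro!: derivative_eq_intros)
  have "((\<lambda>s. pd bs U (x0 + s, t0 - s)) has_derivative
     ((\<lambda>(h,k). pd (True#bs) U (x0 + s, t0 - s) * h + pd (False#bs) U (x0 + s, t0 - s) * k) \<circ> (\<lambda>h. (h, - h)))) (at s)"
    using has_derivative_compose[OF l s2_frechet[OF U]] by (simp add: o_def)
  then show ?thesis unfolding has_field_derivative_def
    by (rule has_derivative_eq_rhs) (auto simp: fun_eq_iff algebra_simps)
qed

lemma schwarz: assumes U: "smooth2 U"
  shows "pd [True, False] U (x0,t0) = pd [False, True] U (x0,t0)"
proof -
  define a where "a = x0 - 1"
  define b where "b = x0 + 1"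
  have cont_xt: "continuous_on S (\<lambda>(t, y). pd [False,True] U (y,t))" for S
  proof -
    have "continuous_on S (pd [False,True] U \<circ> (\<lambda>(t,y). (y,t)))"
      by (intro continuous_on_compose s2_cont[OF U]) (auto intro!: continuous_intros simp: case_prod_beta')
    then show ?thesis by (simp add: o_def case_prod_beta')
  qed
  have ftc: "pd [] U (x,t) = pd [] U (a,t) + integral {a..x} (\<lambda>y. pd [True] U (y,t))" if "a \<le> x" for x t
  proof -
    have "((\<lambda>y. pd [True] U (y,t)) has_integral (pd [] U (x,t) - pd [] U (a,t))) {a..x}"
      apply (rule fundamental_theorem_of_calculus[OF that])
      using s2_dx[OF U, of "[]" t] by (simp add: has_real_derivative_iff_has_vector_derivative[symmetric] has_field_derivative_at_within)
    then show ?thesis by (simp add: integral_unique)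
  qed
  have G: "pd [False] U (x,t0) = pd [False] U (a,t0) + integral {a..x} (\<lambda>y. pd [False,True] U (y,t0))" if "a \<le> x" for x
  proof -
    have L: "((\<lambda>t. integral (cbox a x) (\<lambda>y. pd [True] U (y,t))) has_field_derivative integral (cbox a x) (\<lambda>y. pd [False,True] U (y,t0))) (at t0 within UNIV)"
    proof (rule leibniz_rule_field_derivative[where f="\<lambda>t y. pd [True] U (y,t)" and fx="\<lambda>t y. pd [False,True] U (y,t)"])
      show "((\<lambda>t. pd [True] U (y,t)) has_field_derivative pd [False,True] U (y,t)) (at t within UNIV)" for t y
        using s2_dt[OF U, of "[True]" y t] by simp
      show "(\<lambda>y. pd [True] U (y,t)) integrable_on cbox a x" for t
        unfolding cbox_real_eq
        by (rule integrable_continuous_interval, rule continuous_on_compose2[OF s2_cont[OF U]]) (auto intro!: continuous_intros)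
      show "continuous_on (UNIV \<times> cbox a x) (\<lambda>(t, y). pd [False, True] U (y, t))" by (rule cont_xt)
    qed auto
    have R: "((\<lambda>t. pd [] U (a,t) + integral {a..x} (\<lambda>y. pd [True] U (y,t))) has_real_derivative
        pd [False] U (a,t0) + integral {a..x} (\<lambda>y. pd [False,True] U (y,t0))) (at t0)"
      using DERIV_add[OF s2_dt[OF U, of "[]" a t0] L[unfolded cbox_real_eq]] by simp
    have "((\<lambda>t. pd [] U (x,t)) has_real_derivative
        pd [False] U (a,t0) + integral {a..x} (\<lambda>y. pd [False,True] U (y,t0))) (at t0)"
      using R ftc[OF that] by simp
    then show ?thesis using s2_dt[OF U, of "[]" x t0] DERIV_unique by blast
  qed
  have "((\<lambda>x. pd [False] U (a,t0) + integral {a..x} (\<lambda>y. pd [False,True] U (y,t0))) has_real_derivative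
      pd [False,True] U (x0,t0)) (at x0 within {a..b})"
  proof -
    have c: "continuous_on {a..b} (\<lambda>y. pd [False,True] U (y,t0))"
      by (rule continuous_on_compose2[OF s2_cont[OF U]]) (auto intro!: continuous_intros)
    have "x0 \<in> {a..b}" using a_def b_def by auto
    from DERIV_add[OF DERIV_const[of "pd [False] U (a,t0)"] integral_has_real_derivative[OF c this]] show ?thesis
      by simp
  qed
  moreover have "at x0 within {a..b} = at x0" using a_def b_def by (intro at_within_interior) auto
  ultimately have D: "((\<lambda>x. pd [False] U (a,t0) + integral {a..x} (\<lambda>y. pd [False,True] U (y,t0))) has_real_derivative
      pd [False,True] U (x0,t0)) (at x0)" by simp
  have "((\<lambda>x. pd [False] U (x,t0)) has_real_derivative pd [False,True] U (x0,t0)) (at x0)"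
  proof (rule has_field_derivative_transform_within_open[OF D, where S="{a<..}"])
    show "open {a<..}" by simp
    show "x0 \<in> {a<..}" using a_def by simp
    fix y assume "y \<in> {a<..}"
    then have "a \<le> y" by simp
    from G[OF this] show "pd [False] U (a,t0) + integral {a..y} (\<lambda>y. pd [False,True] U (y,t0)) = pd [False] U (y,t0)"
      by (rule sym)
  qed
  then show ?thesis using s2_dx[OF U, of "[False]" t0 x0] DERIV_unique by blast
qed

lemma adm_smooth: assumes "admissible A xm xp Ainf"
  shows "A differentiable (at x)" "deriv A differentiable (at x)"
proof -
  have s: "smooth1 A" using assms unfolding admissible_def by blast
  show "A differentiable (at x)" using s unfolding smooth1_def by (metis funpow_0)
  have "(deriv ^^ Suc 0) A differentiable (at x)" using s unfolding smooth1_def by blast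
  then show "deriv A differentiable (at x)" by simp
qed

lemma adm_D: assumes "admissible A xm xp Ainf"
  shows "(A has_real_derivative deriv A x) (at x)"
  using adm_smooth[OF assms] DERIV_deriv_iff_real_differentiable by blast

lemma adm_cont: assumes "admissible A xm xp Ainf"
  shows "continuous_on S A" "continuous_on S (deriv A)"
  using adm_smooth[OF assms] by (auto intro!: continuous_at_imp_continuous_on differentiable_imp_continuous_within)

lemma adm_pos: "admissible A xm xp Ainf \<Longrightarrow> A x > 0"
  unfolding admissible_def by blast

lemma deriv_loc_const: fixes A :: "real \<Rightarrow> real" and C :: real assumes "open S" "x \<in> S" "\<And>y. y \<in> S \<Longrightarrow> A y = C"
  shows "deriv A x = 0"
proof -
  have "((\<lambda>y. C) has_real_derivative 0) (at x)" by simp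
  then have "(A has_real_derivative 0) (at x)"
    by (rule has_field_derivative_transform_within_open[OF _ assms(1,2)]) (simp add: assms(3))
  then show ?thesis by (rule DERIV_imp_deriv)
qed

lemma M_bound: assumes adm: "admissible A xm xp Ainf"
  and M_def: "M = Sup (range (\<lambda>x. \<bar>deriv A x / A x\<bar>))"
  shows "\<bar>deriv A x\<bar> \<le> M * A x"
proof -
  define f where "f = (\<lambda>x. \<bar>deriv A x / A x\<bar>)"
  have pos: "\<And>x. A x > 0" using adm_pos[OF adm] by blast
  have xmp: "xm \<le> xp" using adm unfolding admissible_def by auto
  have cf: "continuous_on {xm..xp} f" unfolding f_def
    using adm_cont[OF adm] pos by (auto intro!: continuous_intros simp: less_imp_neq[symmetric])
  obtain z where z: "z \<in> {xm..xp}" "\<And>y. y \<in> {xm..xp} \<Longrightarrow> f y \<le> f z"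
    using continuous_attains_sup[OF compact_Icc _ cf] xmp by auto
  have out: "f y = 0" if "y < xm \<or> y > xp" for y
  proof -
    have "deriv A y = 0"
    proof (cases "y < xm")
      case True then show ?thesis
        using adm unfolding admissible_def by (intro deriv_loc_const[of "{..<xm}" _ _ 1]) auto
    next
      case False then have "y > xp" using that by auto
      then show ?thesis
        using adm unfolding admissible_def by (intro deriv_loc_const[of "{xp<..}" _ _ Ainf]) auto
    qed
    then show ?thesis unfolding f_def by simp
  qed
  have bdd: "bdd_above (range f)"
  proof (rule bdd_aboveI[of _ "f z"])
    fix w assume "w \<in> range f"
    then obtain y where y: "w = f y" by auto
    show "w \<le> f z"
    proof (cases "y \<in> {xm..xp}")
      case True then show ?thesis using z y by auto
    next
      case False then show ?thesis using out[of y] y f_def by auto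
    qed
  qed
  have "f x \<le> M" unfolding M_def f_def[symmetric] by (rule cSup_upper[OF _ bdd]) auto
  then have "\<bar>deriv A x\<bar> / A x \<le> M" unfolding f_def using pos[of x] by simp
  then show ?thesis using pos[of x] by (simp add: divide_le_eq)
qed

lemma pde: assumes adm: "admissible A xm xp Ainf" and sol: "solves_bvp A \<phi> U" and x: "x > 0"
  shows "A x * pd [False,False] U (x,t) = A x * pd [True,True] U (x,t) + deriv A x * pd [True] U (x,t)"
proof -
  have U: "smooth2 U" using sol unfolding solves_bvp_def by blast
  have eq: "pd [False, False] U (x,t) - (1 / A x) * deriv (\<lambda>y. A y * dX U (y,t)) x = 0"
    using sol x unfolding solves_bvp_def by blast
  have "((\<lambda>y. A y * pd [True] U (y,t)) has_real_derivative deriv A x * pd [True] U (x,t) + A x * pd [True,True] U (x,t)) (at x)"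
    using adm_D[OF adm, of x] s2_dx[OF U, of "[True]" t x] by (auto intro!: derivative_eq_intros)
  then have "deriv (\<lambda>y. A y * dX U (y,t)) x = deriv A x * pd [True] U (x,t) + A x * pd [True,True] U (x,t)"
    by (simp add: DERIV_imp_deriv)
  with eq have "pd [False, False] U (x,t) = (1 / A x) * (deriv A x * pd [True] U (x,t) + A x * pd [True,True] U (x,t))"
    by simp
  then show ?thesis using adm_pos[OF adm, of x] by (simp add: field_simps)
qed

lemma zero_region: assumes sol: "solves_bvp A \<phi> U" and x: "x > 0" and t: "t < 0"
  shows "pd [False] U (x,t) = 0" "pd [True] U (x,t) = 0"
proof -
  have z: "\<And>x t. x > 0 \<Longrightarrow> t < 0 \<Longrightarrow> U (x,t) = 0" using sol unfolding solves_bvp_def by blast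
  have "deriv (\<lambda>s. U (x,s)) t = 0"
    by (rule deriv_loc_const[of "{..<0}" _ _ 0]) (use z x t in auto)
  then show "pd [False] U (x,t) = 0" by (simp add: dT_def)
  have "deriv (\<lambda>y. U (y,t)) x = 0"
    by (rule deriv_loc_const[of "{0<..}" _ _ 0]) (use z x t in auto)
  then show "pd [True] U (x,t) = 0" by (simp add: dX_def)
qed

lemma outgoing: assumes adm: "admissible A xm xp Ainf" and sol: "solves_bvp A \<phi> U"
  and l: "l > 0" and A_l: "\<forall>x. x \<ge> l \<longrightarrow> A x = Ainf"
  shows "pd [False] U (l,t) + pd [True] U (l,t) = 0"
proof -
  have U: "smooth2 U" using sol unfolding solves_bvp_def by blast
  define h where "h = (\<lambda>s. pd [False] U (l + s, t - s) + pd [True] U (l + s, t - s))"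
  have hd: "(h has_real_derivative
      (pd [True,False] U (l + s, t - s) - pd [False,False] U (l + s, t - s))
      + (pd [True,True] U (l + s, t - s) - pd [False,True] U (l + s, t - s))) (at s)" for s
    unfolding h_def using s2_line[OF U, of "[False]" l t s] s2_line[OF U, of "[True]" l t s]
    by (auto intro!: derivative_eq_intros)
  define S where "S = \<bar>t\<bar> + 1"
  have S: "0 < S" "t - S < 0" unfolding S_def by auto
  have "h S = h 0"
  proof (rule DERIV_isconst_end[OF S(1)])
    show "continuous_on {0..S} h"
      using hd by (meson DERIV_isCont continuous_at_imp_continuous_on)
    fix s assume s: "0 < s" "s < S"
    have "deriv A (l + s) = 0"
      by (rule deriv_loc_const[of "{l<..}" _ _ Ainf]) (use A_l s in auto)
    then have "pd [False,False] U (l + s, t - s) = pd [True,True] U (l + s, t - s)"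
      using pde[OF adm sol, of "l + s" "t - s"] adm_pos[OF adm, of "l+s"] l s by simp
    moreover have "pd [True,False] U (l + s, t - s) = pd [False,True] U (l + s, t - s)"
      by (rule schwarz[OF U])
    ultimately show "DERIV h s :> 0" using hd[of s] by simp
  qed
  moreover have "h S = 0" unfolding h_def using zero_region[OF sol, of "l + S" "t - S"] S l by simp
  ultimately show ?thesis unfolding h_def by simp
qed

lemma g1_cont: "M > 0 \<Longrightarrow> continuous_on S (g1 M l)"
  using g1_deriv by (meson DERIV_isCont continuous_at_imp_continuous_on)
lemma g2_cont: "M > 0 \<Longrightarrow> continuous_on S (g2 M l)"
  using g2_deriv by (meson DERIV_isCont continuous_at_imp_continuous_on)

lemma g1_cont_comp: "M > 0 \<Longrightarrow> continuous_on S f \<Longrightarrow> continuous_on S (\<lambda>z. g1 M l (f z))"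
  by (rule continuous_on_compose2[OF g1_cont]) auto
lemma g2_cont_comp: "M > 0 \<Longrightarrow> continuous_on S f \<Longrightarrow> continuous_on S (\<lambda>z. g2 M l (f z))"
  by (rule continuous_on_compose2[OF g2_cont]) auto
lemma A_cont_comp: "admissible A xm xp Ainf \<Longrightarrow> continuous_on S f \<Longrightarrow> continuous_on S (\<lambda>z. A (f z))"
  by (rule continuous_on_compose2[OF adm_cont(1)]) auto
lemma A'_cont_comp: "admissible A xm xp Ainf \<Longrightarrow> continuous_on S f \<Longrightarrow> continuous_on S (\<lambda>z. deriv A (f z))"
  by (rule continuous_on_compose2[OF adm_cont(2)]) auto
lemma pd_cont_comp: "smooth2 U \<Longrightarrow> continuous_on S f \<Longrightarrow> continuous_on S g \<Longrightarrow> continuous_on S (\<lambda>z. pd bs U (f z, g z))"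
  by (rule continuous_on_compose2[OF s2_cont]) (auto intro!: continuous_intros)

definition eet :: "(real \<Rightarrow> real) \<Rightarrow> (real \<times> real \<Rightarrow> real) \<Rightarrow> (real \<Rightarrow> real) \<Rightarrow> (real \<Rightarrow> real) \<Rightarrow> real \<Rightarrow> real \<Rightarrow> real" where
  "eet A U G1 G2 \<tau> x = (G1 x * ((pd [False] U (x,\<tau>) + pd [True] U (x,\<tau>)) * (pd [False,False] U (x,\<tau>) + pd [False,True] U (x,\<tau>)))
       + G2 x * ((pd [False] U (x,\<tau>) - pd [True] U (x,\<tau>)) * (pd [False,False] U (x,\<tau>) - pd [False,True] U (x,\<tau>)))) * A x"

definition een :: "(real \<Rightarrow> real) \<Rightarrow> (real \<times> real \<Rightarrow> real) \<Rightarrow> (real \<Rightarrow> real) \<Rightarrow> (real \<Rightarrow> real) \<Rightarrow> real \<Rightarrow> real \<Rightarrow> real" where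
  "een A U G1 G2 \<tau> x = (G1 x * (pd [False] U (x,\<tau>) + pd [True] U (x,\<tau>))^2 + G2 x * (pd [False] U (x,\<tau>) - pd [True] U (x,\<tau>))^2) * A x"

lemma energy_een: "energy A U G1 G2 l \<tau> = 1/2 * integral {0..l} (een A U G1 G2 \<tau>)"
  unfolding energy_def een_def by simp

lemma energy_deriv: assumes adm: "admissible A xm xp Ainf" and U: "smooth2 U" and M: "M > 0"
  shows "((\<lambda>\<tau>. energy A U (g1 M l) (g2 M l) l \<tau>) has_real_derivative integral {0..l} (eet A U (g1 M l) (g2 M l) \<tau>)) (at \<tau>)"
proof -
  have L: "((\<lambda>\<tau>. integral (cbox 0 l) (een A U (g1 M l) (g2 M l) \<tau>)) has_field_derivative
       integral (cbox 0 l) (\<lambda>x. 2 * eet A U (g1 M l) (g2 M l) \<tau> x)) (at \<tau> within UNIV)"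
  proof (rule leibniz_rule_field_derivative[where fx="\<lambda>\<tau> x. 2 * eet A U (g1 M l) (g2 M l) \<tau> x"])
    fix s x
    show "((\<lambda>\<tau>. een A U (g1 M l) (g2 M l) \<tau> x) has_field_derivative 2 * eet A U (g1 M l) (g2 M l) s x) (at s within UNIV)"
      unfolding een_def eet_def
      apply (rule DERIV_cong)
       apply (rule derivative_eq_intros s2_dt[OF U] refl)+
      by (simp add: algebra_simps power2_eq_square)
  next
    fix s
    show "een A U (g1 M l) (g2 M l) s integrable_on cbox 0 l"
      unfolding cbox_real_eq een_def
      by (intro integrable_continuous_interval continuous_intros g1_cont_comp g2_cont_comp A_cont_comp[OF adm] pd_cont_comp[OF U] M)
  next
    show "continuous_on (UNIV \<times> cbox 0 l) (\<lambda>(s, x). 2 * eet A U (g1 M l) (g2 M l) s x)"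
      unfolding eet_def case_prod_beta'
      by (intro continuous_intros g1_cont_comp g2_cont_comp A_cont_comp[OF adm] pd_cont_comp[OF U] M)
  qed auto
  show ?thesis unfolding energy_een using DERIV_cmult[OF L[unfolded cbox_real_eq], of "1/2"]
    by simp
qed

lemma wave_ident: fixes A Ap fa fb Fa Fb ut ux c uxx utt :: real
  assumes "A*utt = A*uxx + Ap*ux"
  shows "(fa*((ut+ux)*(utt+c)) + fb*((ut-ux)*(utt-c)))*A
    = (1/2*Ap*(fa*(ut+ux)^2 - fb*(ut-ux)^2) + 1/2*A*(Fa*(ut+ux)^2 - Fb*(ut-ux)^2) + A*(fa*(ut+ux)*(c+uxx) - fb*(ut-ux)*(c-uxx)))
      + (1/2*Ap*(fb-fa)*(ut+ux)*(ut-ux) - 1/2*A*Fa*(ut+ux)^2 + 1/2*A*Fb*(ut-ux)^2)"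
  using assms by algebra

lemma ineq_pt: fixes A Ap f1 f2 p q M lm :: real
  assumes A: "A > 0" and Ap: "\<bar>Ap\<bar> \<le> M*A" and d: "f1 - f2 \<ge> 0" and M: "M > 0"
  shows "1/2*Ap*(f2-f1)*p*q - 1/2*A*(lm*f1 + M/2*(f1-f2))*p^2 + 1/2*A*(-lm*f2 - M/2*(f1-f2))*q^2
     \<le> -lm * (1/2*(f1*p^2 + f2*q^2)*A)"
proof -
  have pq: "2*\<bar>p*q\<bar> \<le> p^2 + q^2"
  proof -
    have "0 \<le> (\<bar>p\<bar> - \<bar>q\<bar>)^2" by simp
    then show ?thesis by (simp add: power2_eq_square algebra_simps abs_mult)
  qed
  have "\<bar>Ap*(p*q)\<bar> \<le> M*A*\<bar>p*q\<bar>" unfolding abs_mult[of Ap] by (rule mult_right_mono[OF Ap]) simp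
  also have "\<dots> = A*(M/2)*(2*\<bar>p*q\<bar>)" by simp
  also have "\<dots> \<le> A*(M/2)*(p^2+q^2)" using A M pq by (intro mult_left_mono) auto
  finally have key: "0 \<le> Ap*(p*q) + A*(M/2)*(p^2+q^2)" by linarith
  have eq: "1/2*Ap*(f2-f1)*p*q - 1/2*A*(lm*f1 + M/2*(f1-f2))*p^2 + 1/2*A*(-lm*f2 - M/2*(f1-f2))*q^2
     - (-lm * (1/2*(f1*p^2 + f2*q^2)*A)) = - ((f1-f2)/2) * (Ap*(p*q) + A*(M/2)*(p^2+q^2))"
    by algebra
  have "- ((f1-f2)/2) * (Ap*(p*q) + A*(M/2)*(p^2+q^2)) \<le> 0" using d key by simp
  with eq show ?thesis by linarith
qed

lemma energy_ineq:
  assumes adm: "admissible A xm xp Ainf" and sol: "solves_bvp A \<phi> U"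
    and l: "l > 0" and A_l: "\<forall>x. x \<ge> l \<longrightarrow> A x = Ainf"
    and M_def: "M = Sup (range (\<lambda>x. \<bar>deriv A x / A x\<bar>))" and M: "M > 0"
    and phi: "\<phi> \<tau> = 0"
  shows "integral {0..l} (eet A U (g1 M l) (g2 M l) \<tau>) \<le> - lam M l * energy A U (g1 M l) (g2 M l) l \<tau>"
proof -
  have U: "smooth2 U" using sol unfolding solves_bvp_def by blast
  define gg1 where "gg1 = g1 M l"
  define gg2 where "gg2 = g2 M l"
  define lm where "lm = lam M l"
  define ut where "ut x = pd [False] U (x,\<tau>)" for x
  define ux where "ux x = pd [True] U (x,\<tau>)" for x
  define c where "c x = pd [True,False] U (x,\<tau>)" for x
  define uxx where "uxx x = pd [True,True] U (x,\<tau>)" for x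
  define utt where "utt x = pd [False,False] U (x,\<tau>)" for x
  define Ap where "Ap = deriv A"
  define G1 where "G1 x = lm * gg1 x + M/2 * (gg1 x - gg2 x)" for x
  define G2 where "G2 x = - lm * gg2 x - M/2 * (gg1 x - gg2 x)" for x
  define flux where "flux x = 1/2 * A x * (gg1 x * (ut x + ux x)^2 - gg2 x * (ut x - ux x)^2)" for x
  define rest where "rest x = 1/2*Ap x*(gg2 x - gg1 x)*(ut x+ux x)*(ut x-ux x) - 1/2*A x*G1 x*(ut x+ux x)^2 + 1/2*A x*G2 x*(ut x-ux x)^2" for x
  define FD where "FD x = 1/2*Ap x*(gg1 x*(ut x+ux x)^2 - gg2 x*(ut x-ux x)^2) + 1/2*A x*(G1 x*(ut x+ux x)^2 - G2 x*(ut x-ux x)^2) + A x*(gg1 x*(ut x+ux x)*(c x+uxx x) - gg2 x*(ut x-ux x)*(c x-uxx x))" for x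
  define ee where "ee = eet A U gg1 gg2 \<tau>"
  have eex: "ee x = (gg1 x*((ut x+ux x)*(utt x+c x)) + gg2 x*((ut x-ux x)*(utt x-c x)))*A x" for x
    unfolding ee_def eet_def ut_def ux_def utt_def c_def using schwarz[OF U, of x \<tau>] by simp
  have dut: "(ut has_real_derivative c x) (at x)" for x
    unfolding ut_def[abs_def] c_def by (rule s2_dx[OF U])
  have dux: "(ux has_real_derivative uxx x) (at x)" for x
    unfolding ux_def[abs_def] uxx_def by (rule s2_dx[OF U])
  have dA: "(A has_real_derivative Ap x) (at x)" for x unfolding Ap_def by (rule adm_D[OF adm])
  have dg1: "(gg1 has_real_derivative G1 x) (at x)" for x unfolding gg1_def gg2_def G1_def lm_def by (rule g1_deriv[OF M])
  have dg2: "(gg2 has_real_derivative G2 x) (at x)" for x unfolding gg1_def gg2_def G2_def lm_def using g2_deriv[OF M] by simp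
  have fluxD: "(flux has_real_derivative FD x) (at x)" for x
    unfolding flux_def[abs_def]
    apply (rule DERIV_cong)
     apply (rule derivative_eq_intros dut dux dA dg1 dg2 refl)+
    unfolding FD_def by (simp add: power2_eq_square algebra_simps)
  have idx: "FD x = ee x - rest x" if "x > 0" for x
  proof -
    have "A x * utt x = A x * uxx x + Ap x * ux x"
      using pde[OF adm sol that, of \<tau>] unfolding utt_def uxx_def ux_def Ap_def .
    from wave_ident[where fa="gg1 x" and fb="gg2 x" and Fa="G1 x" and Fb="G2 x" and ut="ut x" and c="c x", OF this]
    show ?thesis unfolding eex FD_def rest_def by simp
  qed
  have cflux: "continuous_on {0..l} flux" using fluxD by (meson DERIV_isCont continuous_at_imp_continuous_on)
  have ftc: "((\<lambda>x. ee x - rest x) has_integral flux l - flux 0) {0..l}"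
  proof (rule fundamental_theorem_of_calculus_interior[OF _ cflux])
    show "0 \<le> l" using l by simp
    fix x assume "x \<in> {0<..<l}"
    then have "FD x = ee x - rest x" using idx by simp
    then show "(flux has_vector_derivative ee x - rest x) (at x)"
      using fluxD[of x] by (simp add: has_real_derivative_iff_has_vector_derivative)
  qed
  have cg1: "continuous_on S gg1" for S unfolding gg1_def using g1_cont[OF M] .
  have cg2: "continuous_on S gg2" for S unfolding gg2_def using g2_cont[OF M] .
  have cA: "continuous_on S A" "continuous_on S Ap" for S unfolding Ap_def using adm_cont[OF adm] by auto
  have cpd: "continuous_on S (\<lambda>x. pd bs U (x,\<tau>))" for S bs
    by (rule pd_cont_comp[OF U]) (auto intro!: continuous_intros)
  have crest: "continuous_on {0..l} rest"
    unfolding rest_def[abs_def] G1_def G2_def ut_def ux_def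
    by (intro continuous_intros cg1 cg2 cA cpd)
  have ceen: "continuous_on {0..l} (een A U gg1 gg2 \<tau>)"
    unfolding een_def by (intro continuous_intros cg1 cg2 cA cpd)
  have irest: "rest integrable_on {0..l}" by (rule integrable_continuous_interval[OF crest])
  have ieen: "(\<lambda>x. -lm * (1/2 * een A U gg1 gg2 \<tau> x)) integrable_on {0..l}"
    by (rule integrable_continuous_interval) (intro continuous_intros ceen)
  have "integral {0..l} ee = integral {0..l} (\<lambda>x. (ee x - rest x) + rest x)" by simp
  also have "\<dots> = integral {0..l} (\<lambda>x. ee x - rest x) + integral {0..l} rest"
    by (rule integral_add[OF has_integral_integrable[OF ftc] irest])
  also have "integral {0..l} (\<lambda>x. ee x - rest x) = flux l - flux 0" by (rule integral_unique[OF ftc])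
  finally have I: "integral {0..l} ee = flux l - flux 0 + integral {0..l} rest" .
  have f0: "flux 0 = 0"
  proof -
    have "ux 0 = \<phi> \<tau>" using sol unfolding solves_bvp_def ux_def by simp
    then show ?thesis unfolding flux_def gg1_def gg2_def using g1_0[OF M] g2_0[OF M] phi by simp
  qed
  have fl: "flux l \<le> 0"
  proof -
    have "ut l + ux l = 0" unfolding ut_def ux_def by (rule outgoing[OF adm sol l A_l])
    moreover have "gg2 l > 0" unfolding gg2_def using g2_pos[OF M _ _ l, of l] l by simp
    moreover have "A l > 0" by (rule adm_pos[OF adm])
    ultimately show ?thesis unfolding flux_def by simp
  qed
  have pw: "rest x \<le> -lm * (1/2 * een A U gg1 gg2 \<tau> x)" if x: "x \<in> {0..l}" for x
  proof -
    have "\<bar>Ap x\<bar> \<le> M * A x" unfolding Ap_def by (rule M_bound[OF adm M_def])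
    moreover have "gg1 x - gg2 x \<ge> 0" unfolding gg1_def gg2_def using g1_minus_g2[OF M _ l] x by simp
    ultimately have "rest x \<le> -lm * (1/2*(gg1 x*(ut x + ux x)^2 + gg2 x*(ut x - ux x)^2)*A x)"
      unfolding rest_def G1_def G2_def using ineq_pt[OF adm_pos[OF adm] _ _ M] by blast
    then show ?thesis unfolding een_def ut_def ux_def by (simp add: algebra_simps)
  qed
  have "integral {0..l} rest \<le> integral {0..l} (\<lambda>x. -lm * (1/2 * een A U gg1 gg2 \<tau> x))"
    by (rule integral_le[OF irest ieen pw])
  also have "\<dots> = -lm * energy A U gg1 gg2 l \<tau>" unfolding energy_een by simp
  finally show ?thesis using I f0 fl unfolding ee_def gg1_def gg2_def lm_def by linarith
qed

theorem mainTheorem11: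
  fixes A :: "real \<Rightarrow> real" and xm xp Ainf l M :: real
  assumes adm: "admissible A xm xp Ainf"
    and l_pos: "l > 0"
    and A_l: "\<forall>x. x \<ge> l \<longrightarrow> A x = Ainf"
    and M_def: "M = Sup (range (\<lambda>x. \<bar>deriv A x / A x\<bar>))"
    and M_pos: "M > 0"
  shows "(\<forall>x\<in>{0..l}. g1 M l x > 0 \<and> g2 M l x > 0)
    \<and> g1 M l 0 = 1 \<and> g2 M l 0 = 1
    \<and> (\<forall>x\<in>{0..l}.
          deriv (g1 M l) x - M/2 * \<bar>g1 M l x - g2 M l x\<bar> \<ge> lam M l * g1 M l x
        \<and> - deriv (g2 M l) x - M/2 * \<bar>g1 M l x - g2 M l x\<bar> \<ge> lam M l * g2 M l x)
    \<and> (\<forall>\<phi> U. smooth1 \<phi> \<and> compact (supp \<phi>) \<and> supp \<phi> \<subseteq> {0<..} \<and> supp \<phi> \<noteq> {}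
          \<and> solves_bvp A \<phi> U \<longrightarrow>
          (\<forall>\<tau>. \<tau> > Sup (supp \<phi>) \<longrightarrow>
             energy A U (g1 M l) (g2 M l) l \<tau>
               \<le> energy A U (g1 M l) (g2 M l) l (Sup (supp \<phi>))
                  * exp (- lam M l * (\<tau> - Sup (supp \<phi>)))))"
proof (intro conjI)
  show "\<forall>x\<in>{0..l}. g1 M l x > 0 \<and> g2 M l x > 0"
    using g1_pos[OF M_pos _ l_pos] g2_pos[OF M_pos _ _ l_pos] by auto
  show "g1 M l 0 = 1" by (rule g1_0[OF M_pos])
  show "g2 M l 0 = 1" by (rule g2_0[OF M_pos])
  show "\<forall>x\<in>{0..l}.
          deriv (g1 M l) x - M/2 * \<bar>g1 M l x - g2 M l x\<bar> \<ge> lam M l * g1 M l x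
        \<and> - deriv (g2 M l) x - M/2 * \<bar>g1 M l x - g2 M l x\<bar> \<ge> lam M l * g2 M l x"
  proof
    fix x assume x: "x \<in> {0..l}"
    have d: "\<bar>g1 M l x - g2 M l x\<bar> = g1 M l x - g2 M l x"
      using g1_minus_g2[OF M_pos _ l_pos] x by simp
    show "deriv (g1 M l) x - M/2 * \<bar>g1 M l x - g2 M l x\<bar> \<ge> lam M l * g1 M l x
        \<and> - deriv (g2 M l) x - M/2 * \<bar>g1 M l x - g2 M l x\<bar> \<ge> lam M l * g2 M l x"
      unfolding d DERIV_imp_deriv[OF g1_deriv[OF M_pos]] DERIV_imp_deriv[OF g2_deriv[OF M_pos]]
      by simp
  qed
  show "\<forall>\<phi> U. smooth1 \<phi> \<and> compact (supp \<phi>) \<and> supp \<phi> \<subseteq> {0<..} \<and> supp \<phi> \<noteq> {}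
          \<and> solves_bvp A \<phi> U \<longrightarrow>
          (\<forall>\<tau>. \<tau> > Sup (supp \<phi>) \<longrightarrow>
             energy A U (g1 M l) (g2 M l) l \<tau>
               \<le> energy A U (g1 M l) (g2 M l) l (Sup (supp \<phi>))
                  * exp (- lam M l * (\<tau> - Sup (supp \<phi>))))"
  proof (intro allI impI)
    fix \<phi> U \<tau>
    assume H: "smooth1 \<phi> \<and> compact (supp \<phi>) \<and> supp \<phi> \<subseteq> {0<..} \<and> supp \<phi> \<noteq> {} \<and> solves_bvp A \<phi> U"
      and \<tau>: "\<tau> > Sup (supp \<phi>)"
    define \<tau>0 where "\<tau>0 = Sup (supp \<phi>)"
    have sol: "solves_bvp A \<phi> U" using H by blast
    have U: "smooth2 U" using sol unfolding solves_bvp_def by blast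
    have bdd: "bdd_above (supp \<phi>)" using H by (meson bounded_imp_bdd_above compact_imp_bounded)
    have phi0: "\<phi> s = 0" if "s > \<tau>0" for s
    proof (rule ccontr)
      assume "\<phi> s \<noteq> 0"
      then have "s \<in> closure {t. \<phi> t \<noteq> 0}" by (intro subsetD[OF closure_subset]) simp
      then have "s \<in> supp \<phi>" unfolding supp_def .
      then have "s \<le> \<tau>0" unfolding \<tau>0_def by (rule cSup_upper[OF _ bdd])
      with that show False by simp
    qed
    define E where "E s = energy A U (g1 M l) (g2 M l) l s" for s
    define lm where "lm = lam M l"
    define F where "F s = E s * exp (lm * s)" for s
    have dE: "(E has_real_derivative integral {0..l} (eet A U (g1 M l) (g2 M l) s)) (at s)" for s
      unfolding E_def[abs_def] by (rule energy_deriv[OF adm U M_pos])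
    have dF: "(F has_real_derivative integral {0..l} (eet A U (g1 M l) (g2 M l) s) * exp (lm * s) + E s * (exp (lm * s) * lm)) (at s)" for s
      unfolding F_def[abs_def] by (auto intro!: derivative_eq_intros dE)
    have "F \<tau> \<le> F \<tau>0"
    proof (rule DERIV_nonpos_imp_decreasing_open[of \<tau>0 \<tau> F])
      show "\<tau>0 \<le> \<tau>" using \<tau> \<tau>0_def by simp
      show "continuous_on {\<tau>0..\<tau>} F" using dF by (meson DERIV_isCont continuous_at_imp_continuous_on)
      fix s assume s: "\<tau>0 < s" "s < \<tau>"
      have "integral {0..l} (eet A U (g1 M l) (g2 M l) s) \<le> - lm * E s"
        unfolding E_def lm_def
        by (rule energy_ineq[OF adm sol l_pos A_l M_def M_pos phi0[OF s(1)]])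
      then have le: "integral {0..l} (eet A U (g1 M l) (g2 M l) s) + lm * E s \<le> 0" by simp
      have "integral {0..l} (eet A U (g1 M l) (g2 M l) s) * exp (lm * s) + E s * (exp (lm * s) * lm)
         = (integral {0..l} (eet A U (g1 M l) (g2 M l) s) + lm * E s) * exp (lm * s)" by (simp add: algebra_simps)
      also have "\<dots> \<le> 0" using le by (intro mult_nonpos_nonneg) auto
      finally have "integral {0..l} (eet A U (g1 M l) (g2 M l) s) * exp (lm * s) + E s * (exp (lm * s) * lm) \<le> 0" .
      then show "\<exists>y. (F has_real_derivative y) (at s) \<and> y \<le> 0" using dF by blast
    qed
    then have Fl: "E \<tau> * exp (lm * \<tau>) \<le> E \<tau>0 * exp (lm * \<tau>0)" unfolding F_def .
    have ee: "exp (lm * \<tau>0) * exp (- lm * \<tau>) = exp (- lm * (\<tau> - \<tau>0))"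
    proof -
      have "exp (lm * \<tau>0) * exp (- lm * \<tau>) = exp (lm * \<tau>0 + - lm * \<tau>)" by (rule exp_add[symmetric])
      also have "lm * \<tau>0 + - lm * \<tau> = - lm * (\<tau> - \<tau>0)" by algebra
      finally show ?thesis .
    qed
    have e1: "exp (lm * \<tau>) * exp (- lm * \<tau>) = 1" by (simp add: exp_add[symmetric])
    have "E \<tau> = (E \<tau> * exp (lm * \<tau>)) * exp (- lm * \<tau>)" by (simp only: mult.assoc e1 mult_1_right)
    also have "\<dots> \<le> (E \<tau>0 * exp (lm * \<tau>0)) * exp (- lm * \<tau>)" by (rule mult_right_mono[OF Fl]) simp
    also have "\<dots> = E \<tau>0 * exp (- lm * (\<tau> - \<tau>0))" by (simp only: mult.assoc ee)
    finally have "E \<tau> \<le> E \<tau>0 * exp (- lm * (\<tau> - \<tau>0))" .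
    then show "energy A U (g1 M l) (g2 M l) l \<tau>
               \<le> energy A U (g1 M l) (g2 M l) l (Sup (supp \<phi>)) * exp (- lam M l * (\<tau> - Sup (supp \<phi>)))"
      unfolding E_def lm_def \<tau>0_def .
  qed
qed

end
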